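(* Consider the one-hidden-layer network with scalar input $u^{\mathrm{NN}}(x;\theta)=\frac{1}{\sqrt m}\sum_{i=1}^mW^1_i\sigma(W^0_ix)$, $x\in\mathbb{R}$, $\theta=(W^0,W^1)\in\mathbb{R}^m\times\mathbb{R}^m$, with initialization $\theta_0=(W^0(0),W^1(0))$ having i.i.d. entries of mean $0$, variance $1$ and finite moments of all orders. Let $T\subset\mathbb{R}$ be a convex compact set, $k\geq1$ an integer, and let $\sigma$ satisfy the activation assumption below for $k+2$. Then for any $\delta>0$ there exist functions $B(m)$ with $B(m)\to\infty$ as $m\to\infty$ and $\eta(\varepsilon)$ such that, with probability at least $1-\delta$ over the initialization, for every $\varepsilon>0$, $$\sup_{x\in T}\Big\|\nabla_\theta\frac{d^ku^{\mathrm{NN}}}{dx^k}(x;\theta)-\nabla_\theta\frac{d^ku^{\mathrm{NN}}}{dx^k}(x;\theta_0)\Big\|_2\leq\varepsilon$$ for all $W^0,W^1$ satisfying $\|W^0-W^0(0)\|_2,\|W^1-W^1(0)\|_2\leq B(m)\eta(\varepsilon)$.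
   Context: Activation assumption for an integer $k$: $\sigma\in C^k(\mathbb{R})$ and there are positive constants $l_1,\dots,l_k$ with $\sup_x|\sigma^{(j)}(x)|/(1+|x|^{l_j})<\infty$, $j=1,\dots,k$. *)

theory Defs
  imports "HOL-Probability.Probability"
begin

definition C_n :: "nat \<Rightarrow> (real \<Rightarrow> real) \<Rightarrow> bool" where
  "C_n n \<sigma> \<longleftrightarrow> (\<forall>j<n. \<forall>x. ((deriv ^^ j) \<sigma>) differentiable (at x))
                 \<and> continuous_on UNIV ((deriv ^^ n) \<sigma>)"

definition activation_assm :: "nat \<Rightarrow> (real \<Rightarrow> real) \<Rightarrow> bool" where
  "activation_assm n \<sigma> \<longleftrightarrow> C_n n \<sigma> \<and>
     (\<forall>j\<in>{1..n}. \<exists>l>0. \<exists>C. \<forall>x. \<bar>(deriv ^^ j) \<sigma> x\<bar> / (1 + \<bar>x\<bar> powr l) \<le> C)"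

definition nn :: "nat \<Rightarrow> (real \<Rightarrow> real) \<Rightarrow> (nat \<Rightarrow> real) \<Rightarrow> (nat \<Rightarrow> real) \<Rightarrow> real \<Rightarrow> real" where
  "nn m \<sigma> W0 W1 x = (\<Sum>i<m. W1 i * \<sigma> (W0 i * x)) / sqrt (real m)"

definition nn_dk :: "nat \<Rightarrow> (real \<Rightarrow> real) \<Rightarrow> nat \<Rightarrow> (nat \<Rightarrow> real) \<Rightarrow> (nat \<Rightarrow> real) \<Rightarrow> real \<Rightarrow> real" where
  "nn_dk m \<sigma> k W0 W1 x = (deriv ^^ k) (nn m \<sigma> W0 W1) x"

definition pd0 :: "nat \<Rightarrow> (real \<Rightarrow> real) \<Rightarrow> nat \<Rightarrow> (nat \<Rightarrow> real) \<Rightarrow> (nat \<Rightarrow> real) \<Rightarrow> real \<Rightarrow> nat \<Rightarrow> real" where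
  "pd0 m \<sigma> k W0 W1 x i = deriv (\<lambda>t. nn_dk m \<sigma> k (W0(i := t)) W1 x) (W0 i)"

definition pd1 :: "nat \<Rightarrow> (real \<Rightarrow> real) \<Rightarrow> nat \<Rightarrow> (nat \<Rightarrow> real) \<Rightarrow> (nat \<Rightarrow> real) \<Rightarrow> real \<Rightarrow> nat \<Rightarrow> real" where
  "pd1 m \<sigma> k W0 W1 x i = deriv (\<lambda>t. nn_dk m \<sigma> k W0 (W1(i := t)) x) (W1 i)"

definition grad_dist :: "nat \<Rightarrow> (real \<Rightarrow> real) \<Rightarrow> nat \<Rightarrow> (nat \<Rightarrow> real) \<Rightarrow> (nat \<Rightarrow> real)
    \<Rightarrow> (nat \<Rightarrow> real) \<Rightarrow> (nat \<Rightarrow> real) \<Rightarrow> real \<Rightarrow> real" where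
  "grad_dist m \<sigma> k W0 W1 V0 V1 x = sqrt (\<Sum>i<m.
      (pd0 m \<sigma> k W0 W1 x i - pd0 m \<sigma> k V0 V1 x i)\<^sup>2 + (pd1 m \<sigma> k W0 W1 x i - pd1 m \<sigma> k V0 V1 x i)\<^sup>2)"

definition l2dist :: "nat \<Rightarrow> (nat \<Rightarrow> real) \<Rightarrow> (nat \<Rightarrow> real) \<Rightarrow> real" where
  "l2dist m a b = sqrt (\<Sum>i<m. (a i - b i)\<^sup>2)"

end

theory Submission
  imports Defs
begin


abbreviation sd :: "(real \<Rightarrow> real) \<Rightarrow> nat \<Rightarrow> real \<Rightarrow> real" where
  "sd \<sigma> j \<equiv> (deriv ^^ j) \<sigma>"

lemma sd_deriv:
  assumes "C_n n \<sigma>" "j < n"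
  shows "(sd \<sigma> j has_real_derivative sd \<sigma> (Suc j) y) (at y)"
proof -
  have "sd \<sigma> j differentiable (at y)" using assms unfolding C_n_def by blast
  then have "(sd \<sigma> j has_real_derivative deriv (sd \<sigma> j) y) (at y)"
    using DERIV_deriv_iff_real_differentiable by blast
  then show ?thesis by simp
qed

lemma nn_derivs:
  assumes "C_n n \<sigma>" "j \<le> n"
  shows "(deriv ^^ j) (nn m \<sigma> W0 W1) = (\<lambda>x. \<Sum>l<m. W1 l * W0 l ^ j * sd \<sigma> j (W0 l * x) / sqrt (real m))"
  using assms(2)
proof (induction j)
  case 0
  show ?case by (auto simp: nn_def sum_divide_distrib)
next
  case (Suc j)
  have "j < n" using Suc by simp
  have "(deriv ^^ Suc j) (nn m \<sigma> W0 W1) = deriv (\<lambda>x. \<Sum>l<m. W1 l * W0 l ^ j * sd \<sigma> j (W0 l * x) / sqrt (real m))"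
    using Suc by simp
  also have "\<dots> = (\<lambda>x. \<Sum>l<m. W1 l * W0 l ^ Suc j * sd \<sigma> (Suc j) (W0 l * x) / sqrt (real m))"
  proof
    fix x
    have "((\<lambda>x. \<Sum>l<m. W1 l * W0 l ^ j * sd \<sigma> j (W0 l * x) / sqrt (real m)) has_real_derivative
       (\<Sum>l<m. W1 l * W0 l ^ j * (sd \<sigma> (Suc j) (W0 l * x) * W0 l) / sqrt (real m))) (at x)"
    proof (rule DERIV_sum, rule DERIV_cdivide, rule DERIV_cmult)
      fix l
      have "((\<lambda>x. W0 l * x) has_real_derivative W0 l) (at x)"
        using DERIV_cmult_Id by blast
      then show "((\<lambda>x. sd \<sigma> j (W0 l * x)) has_real_derivative sd \<sigma> (Suc j) (W0 l * x) * W0 l) (at x)"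
        using DERIV_chain2[OF sd_deriv[OF assms(1) \<open>j < n\<close>]] by blast
    qed
    then show "deriv (\<lambda>x. \<Sum>l<m. W1 l * W0 l ^ j * sd \<sigma> j (W0 l * x) / sqrt (real m)) x =
       (\<Sum>l<m. W1 l * W0 l ^ Suc j * sd \<sigma> (Suc j) (W0 l * x) / sqrt (real m))"
      by (auto dest!: DERIV_imp_deriv intro!: sum.cong simp: algebra_simps)
  qed
  finally show ?case .
qed

lemma sum_upd_deriv:
  fixes h :: "nat \<Rightarrow> real \<Rightarrow> real"
  assumes "i < m" "(h i has_real_derivative D) (at (F i))"
  shows "((\<lambda>t. \<Sum>l<m. h l ((F(i:=t)) l)) has_real_derivative D) (at (F i))"
proof -
  have eq: "(\<lambda>t. \<Sum>l<m. h l ((F(i:=t)) l)) = (\<lambda>t. h i t + (\<Sum>l\<in>{..<m}-{i}. h l (F l)))"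
  proof
    fix t
    have "(\<Sum>l<m. h l ((F(i:=t)) l)) = h i ((F(i:=t)) i) + (\<Sum>l\<in>{..<m}-{i}. h l ((F(i:=t)) l))"
      using assms(1) by (subst sum.remove[of _ i]) auto
    also have "(\<Sum>l\<in>{..<m}-{i}. h l ((F(i:=t)) l)) = (\<Sum>l\<in>{..<m}-{i}. h l (F l))"
      by (rule sum.cong) auto
    finally show "(\<Sum>l<m. h l ((F(i:=t)) l)) = h i t + (\<Sum>l\<in>{..<m}-{i}. h l (F l))" by simp
  qed
  show ?thesis unfolding eq using assms(2) by (auto intro!: derivative_eq_intros)
qed

lemma pd1_eq:
  assumes "C_n n \<sigma>" "k \<le> n" "i < m"
  shows "pd1 m \<sigma> k W0 W1 x i = W0 i ^ k * sd \<sigma> k (W0 i * x) / sqrt (real m)"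
proof -
  define h where "h = (\<lambda>l y. y * W0 l ^ k * sd \<sigma> k (W0 l * x) / sqrt (real m))"
  have "(\<lambda>t. nn_dk m \<sigma> k W0 (W1(i := t)) x) = (\<lambda>t. \<Sum>l<m. h l ((W1(i:=t)) l))"
    unfolding nn_dk_def h_def using nn_derivs[OF assms(1,2)] by simp
  moreover have "(h i has_real_derivative W0 i ^ k * sd \<sigma> k (W0 i * x) / sqrt (real m)) (at (W1 i))"
  proof -
    have "((\<lambda>y. y * c) has_real_derivative c) (at z)" for c z :: real by (auto intro!: derivative_eq_intros)
    then show ?thesis unfolding h_def by (simp add: mult.assoc times_divide_eq_right[symmetric] del: times_divide_eq_right)
  qed
  ultimately show ?thesis unfolding pd1_def using sum_upd_deriv[OF assms(3), of h] by (simp add: DERIV_imp_deriv)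
qed

lemma pd0_eq:
  assumes "C_n n \<sigma>" "k + 1 < n" "i < m"
  shows "pd0 m \<sigma> k W0 W1 x i = W1 i * (real k * W0 i ^ (k - 1) * sd \<sigma> k (W0 i * x)
            + W0 i ^ k * (sd \<sigma> (Suc k) (W0 i * x) * x)) / sqrt (real m)"
proof -
  define h where "h = (\<lambda>l y. W1 l * (y ^ k * sd \<sigma> k (y * x)) / sqrt (real m))"
  have "(\<lambda>t. nn_dk m \<sigma> k (W0(i := t)) W1 x) = (\<lambda>t. \<Sum>l<m. h l ((W0(i:=t)) l))"
    unfolding nn_dk_def h_def using nn_derivs[OF assms(1), of k] assms(2) by (simp add: mult.assoc)
  moreover have "(h i has_real_derivative W1 i * (real k * W0 i ^ (k - 1) * sd \<sigma> k (W0 i * x)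
            + W0 i ^ k * (sd \<sigma> (Suc k) (W0 i * x) * x)) / sqrt (real m)) (at (W0 i))"
  proof -
    have "((\<lambda>y. y * x) has_real_derivative x) (at (W0 i))" by (auto intro!: derivative_eq_intros)
    from DERIV_chain2[OF sd_deriv[OF assms(1), of k] this] assms(2)
    have d: "((\<lambda>y. sd \<sigma> k (y * x)) has_real_derivative sd \<sigma> (Suc k) (W0 i * x) * x) (at (W0 i))" by simp
    have p: "((\<lambda>y. y ^ k) has_real_derivative real k * W0 i ^ (k - 1)) (at (W0 i))"
      using DERIV_pow[of k "W0 i"] by simp
    show ?thesis unfolding h_def
      by (rule DERIV_cdivide, rule DERIV_cmult, rule DERIV_mult'[OF p d, THEN DERIV_cong]) (simp add: algebra_simps)
  qed
  ultimately show ?thesis unfolding pd0_def using sum_upd_deriv[OF assms(3), of h] by (simp add: DERIV_imp_deriv)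
qed



lemma lip_aux:
  fixes f f' :: "real \<Rightarrow> real"
  assumes d: "\<And>y. \<bar>y\<bar> \<le> K \<Longrightarrow> (f has_real_derivative f' y) (at y)"
    and b: "\<And>y. \<bar>y\<bar> \<le> K \<Longrightarrow> \<bar>f' y\<bar> \<le> L"
    and "\<bar>a\<bar> \<le> K" "\<bar>c\<bar> \<le> K" "a < c"
  shows "\<bar>f a - f c\<bar> \<le> L * \<bar>a - c\<bar>"
proof -
  have "\<And>x. a \<le> x \<Longrightarrow> x \<le> c \<Longrightarrow> (f has_real_derivative f' x) (at x)"
    using assms by (intro d) auto
  from MVT2[OF \<open>a < c\<close> this] obtain z where z: "a < z" "z < c" "f c - f a = (c - a) * f' z" by blast
  have "\<bar>f' z\<bar> \<le> L" using z assms by (intro b) auto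
  then have "\<bar>(c - a) * f' z\<bar> \<le> \<bar>a - c\<bar> * L" by (simp add: abs_mult mult_left_mono abs_minus_commute)
  then show ?thesis using z by (simp add: abs_minus_commute mult.commute)
qed

lemma lip:
  fixes f f' :: "real \<Rightarrow> real"
  assumes d: "\<And>y. \<bar>y\<bar> \<le> K \<Longrightarrow> (f has_real_derivative f' y) (at y)"
    and b: "\<And>y. \<bar>y\<bar> \<le> K \<Longrightarrow> \<bar>f' y\<bar> \<le> L"
    and "\<bar>a\<bar> \<le> K" "\<bar>c\<bar> \<le> K"
  shows "\<bar>f a - f c\<bar> \<le> L * \<bar>a - c\<bar>"
proof (cases "a < c")
  case True then show ?thesis using lip_aux[where K=K and L=L and a=a and c=c, OF d b] assms by blast
next
  case False
  show ?thesis
  proof (cases "a = c")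
    case True then show ?thesis by simp
  next
    case False
    then have "c < a" using \<open>\<not> a < c\<close> by simp
    have "\<bar>f c - f a\<bar> \<le> L * \<bar>c - a\<bar>" using lip_aux[where K=K and L=L and a=c and c=a, OF d b] assms \<open>c < a\<close> by blast
    then show ?thesis by (simp add: abs_minus_commute)
  qed
qed

lemma single_poly_bound:
  fixes f :: "real \<Rightarrow> real"
  assumes "\<exists>l>0. \<exists>C. \<forall>x. \<bar>f x\<bar> / (1 + \<bar>x\<bar> powr l) \<le> C"
  shows "\<exists>C N. C \<ge> 0 \<and> (\<forall>y. \<bar>f y\<bar> \<le> C * (1 + \<bar>y\<bar>) ^ N)"
proof -
  obtain l C :: real where l: "l > 0" and C: "\<And>x. \<bar>f x\<bar> / (1 + \<bar>x\<bar> powr l) \<le> C" using assms by blast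
  define N where "N = nat \<lceil>l\<rceil>"
  have "0 \<le> \<bar>f 0\<bar> / (1 + \<bar>0::real\<bar> powr l)" by simp
  then have "C \<ge> 0" using C[of 0] by linarith
  have "\<bar>f y\<bar> \<le> (2 * C) * (1 + \<bar>y\<bar>) ^ N" for y
  proof -
    have "\<bar>y\<bar> powr l \<ge> 0" by simp
    then have pos: "1 + \<bar>y\<bar> powr l > 0" by linarith
    have "\<bar>f y\<bar> \<le> C * (1 + \<bar>y\<bar> powr l)" using C[of y] pos by (simp add: divide_le_eq)
    also have "\<bar>y\<bar> powr l \<le> (1 + \<bar>y\<bar>) powr l" by (simp add: powr_mono2 l less_imp_le)
    also have "(1 + \<bar>y\<bar>) powr l \<le> (1 + \<bar>y\<bar>) powr real N"
    proof (rule powr_mono)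
      have "l \<le> of_int \<lceil>l\<rceil>" by (rule le_of_int_ceiling)
      also have "\<dots> = real N" using l unfolding N_def by simp
      finally show "l \<le> real N" .
    qed simp
    also have "(1 + \<bar>y\<bar>) powr real N = (1 + \<bar>y\<bar>) ^ N" by (simp add: powr_realpow)
    finally have "\<bar>f y\<bar> \<le> C * (1 + (1 + \<bar>y\<bar>) ^ N)" using \<open>C \<ge> 0\<close> by (simp add: mult_left_mono)
    moreover have "1 \<le> (1 + \<bar>y\<bar>) ^ N" by simp
    ultimately have "C * (1 + (1 + \<bar>y\<bar>) ^ N) \<le> C * (2 * (1 + \<bar>y\<bar>) ^ N)"
      using \<open>C \<ge> 0\<close> by (intro mult_left_mono) auto
    with \<open>\<bar>f y\<bar> \<le> C * (1 + (1 + \<bar>y\<bar>) ^ N)\<close> show ?thesis by simp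
  qed
  then show ?thesis using \<open>C \<ge> 0\<close> by (intro exI[of _ "2*C"] exI[of _ N]) auto
qed

lemma poly_bound:
  assumes "activation_assm n \<sigma>" "1 \<le> k" "k + 2 \<le> n"
  shows "\<exists>C N. C \<ge> 0 \<and> (\<forall>j\<in>{k..k+2}. \<forall>y. \<bar>sd \<sigma> j y\<bar> \<le> C * (1 + \<bar>y\<bar>) ^ N)"
proof -
  have "\<forall>j\<in>{k..k+2}. \<exists>C N. C \<ge> 0 \<and> (\<forall>y. \<bar>sd \<sigma> j y\<bar> \<le> C * (1 + \<bar>y\<bar>) ^ N)"
    using assms unfolding activation_assm_def by (intro ballI single_poly_bound) auto
  then obtain Cf Nf where CN: "\<And>j. j \<in> {k..k+2} \<Longrightarrow> Cf j \<ge> 0 \<and> (\<forall>y. \<bar>sd \<sigma> j y\<bar> \<le> Cf j * (1 + \<bar>y\<bar>) ^ Nf j)"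
    by metis
  define C where "C = (\<Sum>j\<in>{k..k+2}. Cf j)"
  define N where "N = Max (Nf ` {k..k+2})"
  have "\<bar>sd \<sigma> j y\<bar> \<le> C * (1 + \<bar>y\<bar>) ^ N" if j: "j \<in> {k..k+2}" for j y
  proof -
    have "\<bar>sd \<sigma> j y\<bar> \<le> Cf j * (1 + \<bar>y\<bar>) ^ Nf j" using CN j by blast
    also have "\<dots> \<le> Cf j * (1 + \<bar>y\<bar>) ^ N"
      using CN[OF j] j by (intro mult_left_mono power_increasing) (auto simp: N_def)
    also have "\<dots> \<le> C * (1 + \<bar>y\<bar>) ^ N"
      unfolding C_def using CN j by (intro mult_right_mono member_le_sum) auto
    finally show ?thesis .
  qed
  moreover have "C \<ge> 0" unfolding C_def using CN by (intro sum_nonneg) auto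
  ultimately show ?thesis by blast
qed



lemma mb: "\<bar>a\<bar> \<le> A \<Longrightarrow> \<bar>b\<bar> \<le> B \<Longrightarrow> \<bar>a * b\<bar> \<le> A * (B::real)"
  by (simp add: abs_mult mult_mono')

lemma core:
  fixes \<sigma> :: "real \<Rightarrow> real"
  assumes Cn: "C_n n \<sigma>" "k + 2 \<le> n"
    and hb: "\<forall>j\<in>{k..k+2}. \<forall>y. \<bar>sd \<sigma> j y\<bar> \<le> C * (1 + \<bar>y\<bar>) ^ N" "C \<ge> 0"
    and x: "\<bar>x\<bar> \<le> \<tau>" "\<tau> \<ge> 1" and U: "U \<ge> 1"
    and w: "\<bar>w\<bar> \<le> U" "\<bar>w'\<bar> \<le> U" "\<bar>v\<bar> \<le> U" "\<bar>v'\<bar> \<le> U"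
  shows "\<bar>w ^ k * sd \<sigma> k (w * x) - w' ^ k * sd \<sigma> k (w' * x)\<bar>
           \<le> ((real k + \<tau>)^2 * C * (2*\<tau>)^N) * U ^ (k + N + 1) * (\<bar>w - w'\<bar> + \<bar>v - v'\<bar>)"
    and "\<bar>v * (real k * w ^ (k - 1) * sd \<sigma> k (w * x) + w ^ k * (sd \<sigma> (Suc k) (w * x) * x))
          - v' * (real k * w' ^ (k - 1) * sd \<sigma> k (w' * x) + w' ^ k * (sd \<sigma> (Suc k) (w' * x) * x))\<bar>
           \<le> ((real k + \<tau>)^2 * C * (2*\<tau>)^N) * U ^ (k + N + 1) * (\<bar>w - w'\<bar> + \<bar>v - v'\<bar>)"
proof -
  define S where "S = C * (2*\<tau>)^N * U^N"
  define G where "G = (real k + \<tau>)^2 * C * (2*\<tau>)^N"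
  define g where "g = (\<lambda>j y. sd \<sigma> j (y * x))"
  define \<psi> where "\<psi> = (\<lambda>y. real k * y ^ (k - 1) * g k y + y ^ k * (g (Suc k) y * x))"
  define \<psi>' where "\<psi>' = (\<lambda>y. real k * (real (k - 1) * y ^ (k - 1 - 1) * g k y + y ^ (k - 1) * (g (Suc k) y * x))
      + (real k * y ^ (k - 1) * (g (Suc k) y * x) + y ^ k * (g (Suc (Suc k)) y * x * x)))"
  have S0: "S \<ge> 0" unfolding S_def using hb(2) x U by simp
  have GS: "G * U ^ (k + N) = (real k + \<tau>)^2 * U^k * S" unfolding G_def S_def by (simp add: power_add)
  have gb: "\<bar>g j y\<bar> \<le> S" if "j \<in> {k..k+2}" "\<bar>y\<bar> \<le> U" for j y
  proof -
    have "\<bar>g j y\<bar> \<le> C * (1 + \<bar>y * x\<bar>) ^ N" using hb(1) that unfolding g_def by blast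
    also have "(1 + \<bar>y * x\<bar>) \<le> (2 * \<tau>) * U"
    proof -
      have "\<bar>y * x\<bar> \<le> U * \<tau>" unfolding abs_mult using that x by (intro mult_mono) auto
      moreover have "1 \<le> \<tau> * U" using x U by (metis mult_mono' mult_1 zero_le_one)
      ultimately show ?thesis by (simp add: algebra_simps)
    qed
    then have "C * (1 + \<bar>y * x\<bar>) ^ N \<le> C * ((2 * \<tau>) * U) ^ N"
      using hb(2) by (intro mult_left_mono power_mono) auto
    finally show ?thesis unfolding S_def by (simp add: power_mult_distrib mult.assoc)
  qed
  have pw: "\<bar>y ^ a\<bar> \<le> U ^ k" if "\<bar>y\<bar> \<le> U" "a \<le> k" for y a
  proof -
    have "\<bar>y ^ a\<bar> \<le> U ^ a" unfolding power_abs by (rule power_mono) (use that in auto)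
    also have "\<dots> \<le> U ^ k" using U that by (intro power_increasing) auto
    finally show ?thesis .
  qed
  have kt: "1 \<le> real k + \<tau>" using x by simp
  have psib: "\<bar>\<psi> y\<bar> \<le> G * U ^ (k + N)" if "\<bar>y\<bar> \<le> U" for y
  proof -
    have "\<bar>\<psi> y\<bar> \<le> real k * U^k * S + U^k * (S * \<tau>)"
      unfolding \<psi>_def
      by (intro order_trans[OF abs_triangle_ineq add_mono] mb pw gb) (use that x in auto)
    also have "\<dots> = (real k + \<tau>) * U^k * S" by (simp add: algebra_simps)
    also have "\<dots> \<le> (real k + \<tau>)^2 * U^k * S"
      using kt S0 U by (intro mult_right_mono) (auto simp: power2_eq_square)
    finally show ?thesis using GS by simp
  qed
  have psi'b: "\<bar>\<psi>' y\<bar> \<le> G * U ^ (k + N)" if "\<bar>y\<bar> \<le> U" for y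
  proof -
    have "\<bar>\<psi>' y\<bar> \<le> real k * (real k * U^k * S + U^k * (S * \<tau>)) + (real k * U^k * (S * \<tau>) + U^k * (S * \<tau> * \<tau>))"
      unfolding \<psi>'_def
      by (intro order_trans[OF abs_triangle_ineq add_mono] mb pw gb) (use that x in auto)
    also have "\<dots> = (real k + \<tau>)^2 * U^k * S" by (simp add: algebra_simps power2_eq_square)
    finally show ?thesis using GS by simp
  qed
  have gd: "(g j has_real_derivative g (Suc j) y * x) (at y)" if "j < n" for j y
  proof -
    have "((\<lambda>y. y * x) has_real_derivative x) (at y)" by (auto intro!: derivative_eq_intros)
    from DERIV_chain2[OF sd_deriv[OF Cn(1) that] this] show ?thesis unfolding g_def by simp
  qed
  have psid: "(\<psi> has_real_derivative \<psi>' y) (at y)" for y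
  proof -
    have p1: "((\<lambda>y. y ^ (k-1)) has_real_derivative real (k - 1) * y ^ (k - 1 - 1)) (at y)"
      using DERIV_pow[of "k-1" y] by simp
    have p2: "((\<lambda>y. y ^ k) has_real_derivative real k * y ^ (k - 1)) (at y)"
      using DERIV_pow[of k y] by simp
    have g1: "(g k has_real_derivative g (Suc k) y * x) (at y)" using gd Cn by simp
    have g2: "(g (Suc k) has_real_derivative g (Suc (Suc k)) y * x) (at y)" using gd Cn by simp
    have "((\<lambda>y. real k * (y ^ (k - 1) * g k y) + y ^ k * (g (Suc k) y * x)) has_real_derivative \<psi>' y) (at y)"
      unfolding \<psi>'_def
      by (rule DERIV_add[OF DERIV_cmult[OF DERIV_mult'[OF p1 g1]] DERIV_mult'[OF p2 DERIV_cmult_right[OF g2]], THEN DERIV_cong])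
         (simp add: algebra_simps)
    moreover have "(\<lambda>y. real k * (y ^ (k - 1) * g k y) + y ^ k * (g (Suc k) y * x)) = \<psi>"
      unfolding \<psi>_def by (simp add: mult.assoc)
    ultimately show ?thesis by simp
  qed
  have phid: "((\<lambda>y. y ^ k * g k y) has_real_derivative \<psi> y) (at y)" for y
  proof -
    have p2: "((\<lambda>y. y ^ k) has_real_derivative real k * y ^ (k - 1)) (at y)"
      using DERIV_pow[of k y] by simp
    have g1: "(g k has_real_derivative g (Suc k) y * x) (at y)" using gd Cn by simp
    show ?thesis unfolding \<psi>_def
      by (rule DERIV_mult'[OF p2 g1, THEN DERIV_cong]) (simp add: algebra_simps)
  qed
  have GU: "G * U ^ (k + N) \<le> G * U ^ (k + N + 1)"
    using U kt hb(2) x unfolding G_def by (intro mult_left_mono power_increasing) auto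
  have G0: "G * U ^ (k + N) \<ge> 0" unfolding G_def using hb(2) x U by simp
  have "\<bar>w ^ k * g k w - w' ^ k * g k w'\<bar> \<le> G * U ^ (k + N) * \<bar>w - w'\<bar>"
    by (rule lip[where K=U, OF phid psib]) (use w in auto)
  also have "\<dots> \<le> G * U ^ (k + N + 1) * (\<bar>w - w'\<bar> + \<bar>v - v'\<bar>)"
    by (rule mult_mono[OF GU]) (use G0 GU in auto)
  finally show "\<bar>w ^ k * sd \<sigma> k (w * x) - w' ^ k * sd \<sigma> k (w' * x)\<bar>
           \<le> ((real k + \<tau>)^2 * C * (2*\<tau>)^N) * U ^ (k + N + 1) * (\<bar>w - w'\<bar> + \<bar>v - v'\<bar>)"
    unfolding g_def G_def .
  have "\<bar>v * \<psi> w - v' * \<psi> w'\<bar> = \<bar>(v - v') * \<psi> w + v' * (\<psi> w - \<psi> w')\<bar>" by (simp add: algebra_simps)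
  also have "\<dots> \<le> \<bar>v - v'\<bar> * (G * U ^ (k + N)) + U * (G * U ^ (k + N) * \<bar>w - w'\<bar>)"
    by (intro order_trans[OF abs_triangle_ineq add_mono] mb psib lip[where K=U, OF psid psi'b]) (use w in auto)
  also have "\<dots> \<le> \<bar>v - v'\<bar> * (G * U ^ (k + N + 1)) + G * U ^ (k + N + 1) * \<bar>w - w'\<bar>"
    by (rule add_mono[OF mult_left_mono[OF GU]]) (auto simp: algebra_simps)
  also have "\<dots> = G * U ^ (k + N + 1) * (\<bar>w - w'\<bar> + \<bar>v - v'\<bar>)" by (simp add: algebra_simps)
  finally show "\<bar>v * (real k * w ^ (k - 1) * sd \<sigma> k (w * x) + w ^ k * (sd \<sigma> (Suc k) (w * x) * x))
          - v' * (real k * w' ^ (k - 1) * sd \<sigma> k (w' * x) + w' ^ k * (sd \<sigma> (Suc k) (w' * x) * x))\<bar>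
           \<le> ((real k + \<tau>)^2 * C * (2*\<tau>)^N) * U ^ (k + N + 1) * (\<bar>w - w'\<bar> + \<bar>v - v'\<bar>)"
    unfolding \<psi>_def g_def G_def .
qed



lemma sq_le: "\<bar>d\<bar> \<le> (e::real) \<Longrightarrow> d\<^sup>2 \<le> e\<^sup>2"
  by (metis abs_ge_zero order_trans power2_abs power_mono)

lemma sum_sq: "((a::real) + b)\<^sup>2 \<le> 2 * (a\<^sup>2 + b\<^sup>2)"
proof -
  have "0 \<le> (a - b)\<^sup>2" by simp
  then have "0 \<le> 2 * (a\<^sup>2 + b\<^sup>2) - (a + b)\<^sup>2" by (simp add: power2_eq_square algebra_simps)
  then show ?thesis by linarith
qed

lemma coord_le: "i < m \<Longrightarrow> l2dist m a b \<le> R \<Longrightarrow> \<bar>a i - b i\<bar> \<le> R"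
proof -
  assume "i < m" "l2dist m a b \<le> R"
  have "(a i - b i)\<^sup>2 \<le> (\<Sum>j<m. (a j - b j)\<^sup>2)"
    using \<open>i < m\<close> by (intro member_le_sum) auto
  then have "sqrt ((a i - b i)\<^sup>2) \<le> l2dist m a b" unfolding l2dist_def by (rule real_sqrt_le_mono)
  then show ?thesis using \<open>l2dist m a b \<le> R\<close> by simp
qed

lemma grad_bound:
  fixes \<sigma> :: "real \<Rightarrow> real"
  assumes Cn: "C_n n \<sigma>" "k + 2 \<le> n"
    and hb: "\<forall>j\<in>{k..k+2}. \<forall>y. \<bar>sd \<sigma> j y\<bar> \<le> C * (1 + \<bar>y\<bar>) ^ N" "C \<ge> 0"
    and x: "\<bar>x\<bar> \<le> \<tau>" "\<tau> \<ge> 1" and K: "K \<ge> 0" "R \<ge> 0"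
    and V: "\<And>i. i < m \<Longrightarrow> \<bar>Va i\<bar> \<le> K \<and> \<bar>Vb i\<bar> \<le> K"
    and W: "l2dist m Wa Va \<le> R" "l2dist m Wb Vb \<le> R"
    and m: "m > 0"
  shows "grad_dist m \<sigma> k Wa Wb Va Vb x
     \<le> sqrt 8 * (((real k + \<tau>)^2 * C * (2*\<tau>)^N) * (1 + K + R) ^ (k + N + 1)) * R / sqrt (real m)"
proof -
  define L where "L = ((real k + \<tau>)^2 * C * (2*\<tau>)^N) * (1 + K + R) ^ (k + N + 1)"
  have L0: "L \<ge> 0" unfolding L_def using hb x K by simp
  have sm: "sqrt (real m) > 0" using m by simp
  have trm: "(pd0 m \<sigma> k Wa Wb x i - pd0 m \<sigma> k Va Vb x i)\<^sup>2 + (pd1 m \<sigma> k Wa Wb x i - pd1 m \<sigma> k Va Vb x i)\<^sup>2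
      \<le> 4 * L\<^sup>2 * ((Wa i - Va i)\<^sup>2 + (Wb i - Vb i)\<^sup>2) / real m" if i: "i < m" for i
  proof -
    have a: "\<bar>Wa i - Va i\<bar> \<le> R" "\<bar>Wb i - Vb i\<bar> \<le> R" using coord_le[OF i] W by auto
    have U: "\<bar>Wa i\<bar> \<le> 1 + K + R" "\<bar>Va i\<bar> \<le> 1 + K + R" "\<bar>Wb i\<bar> \<le> 1 + K + R" "\<bar>Vb i\<bar> \<le> 1 + K + R"
      using a V[OF i] K by auto
    note c = core[OF Cn hb x _ U, unfolded L_def[symmetric]]
    have e0: "pd0 m \<sigma> k Wa Wb x i - pd0 m \<sigma> k Va Vb x i =
      (Wb i * (real k * Wa i ^ (k - 1) * sd \<sigma> k (Wa i * x) + Wa i ^ k * (sd \<sigma> (Suc k) (Wa i * x) * x))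
       - Vb i * (real k * Va i ^ (k - 1) * sd \<sigma> k (Va i * x) + Va i ^ k * (sd \<sigma> (Suc k) (Va i * x) * x))) / sqrt (real m)"
      using Cn i by (simp add: pd0_eq diff_divide_distrib)
    have e1: "pd1 m \<sigma> k Wa Wb x i - pd1 m \<sigma> k Va Vb x i =
      (Wa i ^ k * sd \<sigma> k (Wa i * x) - Va i ^ k * sd \<sigma> k (Va i * x)) / sqrt (real m)"
      using Cn i by (simp add: pd1_eq diff_divide_distrib)
    have c0: "\<bar>Wb i * (real k * Wa i ^ (k - 1) * sd \<sigma> k (Wa i * x) + Wa i ^ k * (sd \<sigma> (Suc k) (Wa i * x) * x))
       - Vb i * (real k * Va i ^ (k - 1) * sd \<sigma> k (Va i * x) + Va i ^ k * (sd \<sigma> (Suc k) (Va i * x) * x))\<bar>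
       \<le> L * (\<bar>Wa i - Va i\<bar> + \<bar>Wb i - Vb i\<bar>)" by (rule c(2)) (use K in simp)
    have c1: "\<bar>Wa i ^ k * sd \<sigma> k (Wa i * x) - Va i ^ k * sd \<sigma> k (Va i * x)\<bar>
       \<le> L * (\<bar>Wa i - Va i\<bar> + \<bar>Wb i - Vb i\<bar>)" by (rule c(1)) (use K in simp)
    have "(pd0 m \<sigma> k Wa Wb x i - pd0 m \<sigma> k Va Vb x i)\<^sup>2 \<le> (L * (\<bar>Wa i - Va i\<bar> + \<bar>Wb i - Vb i\<bar>))\<^sup>2 / real m"
      unfolding e0 power_divide by (subst real_sqrt_pow2, simp, intro divide_right_mono sq_le c0, simp)
    moreover have "(pd1 m \<sigma> k Wa Wb x i - pd1 m \<sigma> k Va Vb x i)\<^sup>2 \<le> (L * (\<bar>Wa i - Va i\<bar> + \<bar>Wb i - Vb i\<bar>))\<^sup>2 / real m"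
      unfolding e1 power_divide by (subst real_sqrt_pow2, simp, intro divide_right_mono sq_le c1, simp)
    moreover have "2 * (L * (\<bar>Wa i - Va i\<bar> + \<bar>Wb i - Vb i\<bar>))\<^sup>2 \<le> 4 * L\<^sup>2 * ((Wa i - Va i)\<^sup>2 + (Wb i - Vb i)\<^sup>2)"
    proof -
      have "(\<bar>Wa i - Va i\<bar> + \<bar>Wb i - Vb i\<bar>)\<^sup>2 \<le> 2 * ((Wa i - Va i)\<^sup>2 + (Wb i - Vb i)\<^sup>2)"
        using sum_sq[of "\<bar>Wa i - Va i\<bar>" "\<bar>Wb i - Vb i\<bar>"] by simp
      from mult_left_mono[OF this, of "2*L\<^sup>2"] show ?thesis by (simp only: power_mult_distrib) (simp add: algebra_simps)
    qed
    ultimately show ?thesis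
    proof -
      assume h0: "(pd0 m \<sigma> k Wa Wb x i - pd0 m \<sigma> k Va Vb x i)\<^sup>2 \<le> (L * (\<bar>Wa i - Va i\<bar> + \<bar>Wb i - Vb i\<bar>))\<^sup>2 / real m"
        and h1: "(pd1 m \<sigma> k Wa Wb x i - pd1 m \<sigma> k Va Vb x i)\<^sup>2 \<le> (L * (\<bar>Wa i - Va i\<bar> + \<bar>Wb i - Vb i\<bar>))\<^sup>2 / real m"
        and h2: "2 * (L * (\<bar>Wa i - Va i\<bar> + \<bar>Wb i - Vb i\<bar>))\<^sup>2 \<le> 4 * L\<^sup>2 * ((Wa i - Va i)\<^sup>2 + (Wb i - Vb i)\<^sup>2)"
      have "(L * (\<bar>Wa i - Va i\<bar> + \<bar>Wb i - Vb i\<bar>))\<^sup>2 / real m + (L * (\<bar>Wa i - Va i\<bar> + \<bar>Wb i - Vb i\<bar>))\<^sup>2 / real m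
         = 2 * (L * (\<bar>Wa i - Va i\<bar> + \<bar>Wb i - Vb i\<bar>))\<^sup>2 / real m" by simp
      also have "\<dots> \<le> 4 * L\<^sup>2 * ((Wa i - Va i)\<^sup>2 + (Wb i - Vb i)\<^sup>2) / real m"
        by (rule divide_right_mono[OF h2]) simp
      finally show ?thesis using h0 h1 by linarith
    qed
  qed
  have "grad_dist m \<sigma> k Wa Wb Va Vb x \<le> sqrt (\<Sum>i<m. 4 * L\<^sup>2 * ((Wa i - Va i)\<^sup>2 + (Wb i - Vb i)\<^sup>2) / real m)"
    unfolding grad_dist_def by (intro real_sqrt_le_mono sum_mono trm) auto
  also have "(\<Sum>i<m. 4 * L\<^sup>2 * ((Wa i - Va i)\<^sup>2 + (Wb i - Vb i)\<^sup>2) / real m)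
      = 4 * L\<^sup>2 * ((l2dist m Wa Va)\<^sup>2 + (l2dist m Wb Vb)\<^sup>2) / real m"
    unfolding l2dist_def by (simp add: sum_divide_distrib[symmetric] sum_distrib_left[symmetric] sum.distrib sum_nonneg)
  also have "\<dots> \<le> 4 * L\<^sup>2 * (R\<^sup>2 + R\<^sup>2) / real m"
    using W m by (intro divide_right_mono mult_left_mono add_mono power_mono) (auto simp: l2dist_def sum_nonneg)
  also have "sqrt (4 * L\<^sup>2 * (R\<^sup>2 + R\<^sup>2) / real m) = sqrt 8 * L * R / sqrt (real m)"
    using L0 K by (simp add: real_sqrt_mult real_sqrt_divide power2_eq_square)
  finally show ?thesis unfolding L_def by simp
qed



lemma tail_bound:
  assumes P: "prob_space M" and X: "X \<in> borel_measurable M" and Y: "Y \<in> borel_measurable M"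
    and d: "distr M borel X = distr M borel Y"
    and I: "integrable M (\<lambda>\<omega>. \<bar>Y \<omega>\<bar> ^ p)" and k: "(\<kappa>::real) > 0"
  shows "measure M {\<omega>\<in>space M. \<kappa> < \<bar>X \<omega>\<bar>} \<le> (\<integral>\<omega>. \<bar>Y \<omega>\<bar> ^ p \<partial>M) / \<kappa> ^ p"
proof -
  interpret prob_space M by (rule P)
  have S: "{y::real. \<kappa> < \<bar>y\<bar>} \<in> sets borel" by measurable
  have "measure M {\<omega>\<in>space M. \<kappa> < \<bar>X \<omega>\<bar>} = measure (distr M borel X) {y. \<kappa> < \<bar>y\<bar>}"
    using measure_distr[OF X S] by (simp add: vimage_def Int_def conj_commute)
  also have "\<dots> = measure (distr M borel Y) {y. \<kappa> < \<bar>y\<bar>}" using d by simp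
  also have "\<dots> = measure M {\<omega>\<in>space M. \<kappa> < \<bar>Y \<omega>\<bar>}"
    using measure_distr[OF Y S] by (simp add: vimage_def Int_def conj_commute)
  also have "\<dots> \<le> measure M {\<omega>\<in>space M. \<kappa> ^ p \<le> \<bar>Y \<omega>\<bar> ^ p}"
  proof (rule finite_measure_mono)
    show "{\<omega>\<in>space M. \<kappa> < \<bar>Y \<omega>\<bar>} \<subseteq> {\<omega>\<in>space M. \<kappa> ^ p \<le> \<bar>Y \<omega>\<bar> ^ p}"
      using k by (auto intro: power_mono)
    show "{\<omega>\<in>space M. \<kappa> ^ p \<le> \<bar>Y \<omega>\<bar> ^ p} \<in> sets M" using Y by measurable
  qed
  also have "\<dots> \<le> (\<integral>\<omega>. \<bar>Y \<omega>\<bar> ^ p \<partial>M) / \<kappa> ^ p"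
    by (rule integral_Markov_inequality_measure[OF I, where A="space M"]) (use k in auto)
  finally show ?thesis .
qed



theorem lemma6:
  fixes M :: "'a measure" and X0 X1 :: "nat \<Rightarrow> 'a \<Rightarrow> real"
    and T :: "real set" and k :: nat and \<sigma> :: "real \<Rightarrow> real"
  assumes "prob_space M"
    and "prob_space.indep_vars M (\<lambda>_. borel) (case_sum X0 X1) UNIV"
    and "\<And>i. distr M borel (X0 i) = distr M borel (X0 0)"
    and "\<And>i. distr M borel (X1 i) = distr M borel (X0 0)"
    and "\<And>p::nat. integrable M (\<lambda>\<omega>. \<bar>X0 0 \<omega>\<bar> ^ p)"
    and "integral\<^sup>L M (X0 0) = 0"
    and "integral\<^sup>L M (\<lambda>\<omega>. (X0 0 \<omega>)\<^sup>2) = 1"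
    and "convex T" and "compact T"
    and "k \<ge> 1"
    and "activation_assm (k + 2) \<sigma>"
  shows "\<forall>\<delta>>0. \<exists>B \<eta>. filterlim B at_top sequentially \<and> (\<forall>m. B m > 0) \<and> (\<forall>\<epsilon>>0. \<eta> \<epsilon> > (0::real)) \<and>
     (\<forall>m. \<exists>A\<in>sets M. measure M A \<ge> 1 - \<delta> \<and>
        (\<forall>\<omega>\<in>A. \<forall>\<epsilon>>0. \<forall>W0 W1.
           l2dist m W0 (\<lambda>i. X0 i \<omega>) \<le> B m * \<eta> \<epsilon> \<and> l2dist m W1 (\<lambda>i. X1 i \<omega>) \<le> B m * \<eta> \<epsilon>
           \<longrightarrow> (\<forall>x\<in>T. grad_dist m \<sigma> k W0 W1 (\<lambda>i. X0 i \<omega>) (\<lambda>i. X1 i \<omega>) x \<le> \<epsilon>)))"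
proof (intro allI impI)
  fix \<delta> :: real assume \<delta>: "\<delta> > 0"
  interpret P: prob_space M by (rule assms(1))
  have rv: "case_sum X0 X1 i \<in> borel_measurable M" for i
    using assms(2) unfolding P.indep_vars_def2 by auto
  have X0m: "X0 i \<in> borel_measurable M" for i using rv[of "Inl i"] by simp
  have X1m: "X1 i \<in> borel_measurable M" for i using rv[of "Inr i"] by simp
  have Cn: "C_n (k + 2) \<sigma>" using assms(11) unfolding activation_assm_def by blast
  obtain C N where C0: "C \<ge> 0" and hb: "\<forall>j\<in>{k..k+2}. \<forall>y. \<bar>sd \<sigma> j y\<bar> \<le> C * (1 + \<bar>y\<bar>) ^ N"
    using poly_bound[OF assms(11,10)] by auto
  obtain \<tau>0 where \<tau>0: "\<forall>x\<in>T. \<bar>x\<bar> \<le> \<tau>0"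
    using compact_imp_bounded[OF assms(9)] unfolding bounded_real by blast
  define \<tau> where "\<tau> = max 1 \<tau>0"
  have \<tau>: "\<tau> \<ge> 1" "\<And>x. x \<in> T \<Longrightarrow> \<bar>x\<bar> \<le> \<tau>" using \<tau>0 unfolding \<tau>_def by auto
  define G where "G = (real k + \<tau>)^2 * C * (2*\<tau>)^N"
  have G0: "G \<ge> 0" unfolding G_def using C0 \<tau> by simp
  define D where "D = k + N + 1"
  define p where "p = 2 * (D + 1)"
  define a where "a = 1 / (2 * (real D + 1))"
  define E where "E = (\<integral>\<omega>. \<bar>X0 0 \<omega>\<bar> ^ p \<partial>M)"
  have E0: "E \<ge> 0" unfolding E_def by simp
  define c where "c = 1 + 2 * E / \<delta>"
  have c1: "c \<ge> 1" unfolding c_def using E0 \<delta> by simp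
  define B where "B = (\<lambda>m::nat. (real m + 1) powr a)"
  define \<eta> where "\<eta> = (\<lambda>\<epsilon>::real. min 1 (\<epsilon> / (4 * (G + 1) * (2 + c) ^ D)))"
  have Bpos: "B m > 0" for m unfolding B_def by simp
  have B1: "B m \<ge> 1" for m unfolding B_def a_def by (simp add: ge_one_powr_ge_zero)
  have Bpow: "B m ^ n = (real m + 1) powr (a * real n)" for m n
    unfolding B_def by (simp add: powr_powr[symmetric] powr_realpow)
  have ap: "a * real p = 1" unfolding a_def p_def by (simp add: field_simps)
  have aD: "a * real (D + 1) = 1/2" unfolding a_def by (simp add: field_simps)
  have Bp: "B m ^ p = real m + 1" for m
    using Bpow[of m p] unfolding ap by simp
  have BD: "B m ^ (D + 1) = sqrt (real m + 1)" for m
    using Bpow[of m "D+1"] unfolding aD by (simp add: powr_half_sqrt)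
  have lim: "filterlim B at_top sequentially"
    unfolding filterlim_at_top
  proof
    fix Z :: real
    have "eventually (\<lambda>m. \<bar>Z\<bar> ^ p \<le> real m) sequentially"
      using filterlim_real_sequentially unfolding filterlim_at_top by blast
    then show "eventually (\<lambda>m. Z \<le> B m) sequentially"
    proof (rule eventually_mono)
      fix m assume "\<bar>Z\<bar> ^ p \<le> real m"
      then have "\<bar>Z\<bar> ^ p \<le> B m ^ p" using Bp[of m] by simp
      moreover have "p = Suc (2 * D + 1)" unfolding p_def by simp
      ultimately have "\<bar>Z\<bar> \<le> B m" using power_le_imp_le_base[of "\<bar>Z\<bar>" "2 * D + 1" "B m"] Bpos[of m] by simp
      then show "Z \<le> B m" by simp
    qed
  qed
  have etapos: "\<forall>\<epsilon>>0. \<eta> \<epsilon> > 0" unfolding \<eta>_def using G0 c1 by auto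
  have main: "\<exists>A\<in>sets M. measure M A \<ge> 1 - \<delta> \<and>
        (\<forall>\<omega>\<in>A. \<forall>\<epsilon>>0. \<forall>W0 W1.
           l2dist m W0 (\<lambda>i. X0 i \<omega>) \<le> B m * \<eta> \<epsilon> \<and> l2dist m W1 (\<lambda>i. X1 i \<omega>) \<le> B m * \<eta> \<epsilon>
           \<longrightarrow> (\<forall>x\<in>T. grad_dist m \<sigma> k W0 W1 (\<lambda>i. X0 i \<omega>) (\<lambda>i. X1 i \<omega>) x \<le> \<epsilon>))" for m
  proof -
    define \<kappa> where "\<kappa> = c * B m"
    have \<kappa>1: "\<kappa> \<ge> 1" unfolding \<kappa>_def using c1 B1[of m] by (metis mult_mono' mult_1 zero_le_one)
    then have \<kappa>0: "\<kappa> > 0" by simp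
    have s0: "{\<omega>\<in>space M. \<kappa> < \<bar>X0 i \<omega>\<bar>} \<in> sets M" for i using X0m[of i] by measurable
    have s1: "{\<omega>\<in>space M. \<kappa> < \<bar>X1 i \<omega>\<bar>} \<in> sets M" for i using X1m[of i] by measurable
    define Bad where "Bad = (\<Union>i\<in>{..<m}. {\<omega>\<in>space M. \<kappa> < \<bar>X0 i \<omega>\<bar>} \<union> {\<omega>\<in>space M. \<kappa> < \<bar>X1 i \<omega>\<bar>})"
    have Bad_s: "Bad \<in> sets M" unfolding Bad_def
      by (intro sets.finite_UN) (auto intro!: sets.Un s0 s1)
    have tb0: "measure M {\<omega>\<in>space M. \<kappa> < \<bar>X0 i \<omega>\<bar>} \<le> E / \<kappa> ^ p" for i
      unfolding E_def by (rule tail_bound[OF assms(1) X0m X0m assms(3) assms(5) \<kappa>0])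
    have tb1: "measure M {\<omega>\<in>space M. \<kappa> < \<bar>X1 i \<omega>\<bar>} \<le> E / \<kappa> ^ p" for i
      unfolding E_def by (rule tail_bound[OF assms(1) X1m X0m assms(4) assms(5) \<kappa>0])
    have "measure M Bad \<le> (\<Sum>i<m. measure M ({\<omega>\<in>space M. \<kappa> < \<bar>X0 i \<omega>\<bar>} \<union> {\<omega>\<in>space M. \<kappa> < \<bar>X1 i \<omega>\<bar>}))"
      unfolding Bad_def by (rule P.finite_measure_subadditive_finite) (auto intro!: sets.Un s0 s1)
    also have "\<dots> \<le> (\<Sum>i<m. 2 * E / \<kappa> ^ p)"
    proof (rule sum_mono)
      fix i
      have "measure M ({\<omega>\<in>space M. \<kappa> < \<bar>X0 i \<omega>\<bar>} \<union> {\<omega>\<in>space M. \<kappa> < \<bar>X1 i \<omega>\<bar>})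
          \<le> measure M {\<omega>\<in>space M. \<kappa> < \<bar>X0 i \<omega>\<bar>} + measure M {\<omega>\<in>space M. \<kappa> < \<bar>X1 i \<omega>\<bar>}"
        by (rule measure_Un_le[OF s0 s1])
      then show "measure M ({\<omega>\<in>space M. \<kappa> < \<bar>X0 i \<omega>\<bar>} \<union> {\<omega>\<in>space M. \<kappa> < \<bar>X1 i \<omega>\<bar>}) \<le> 2 * E / \<kappa> ^ p"
        using tb0[of i] tb1[of i] by simp
    qed
    also have "\<dots> = real m * (2 * E / \<kappa> ^ p)" by simp
    also have "\<dots> \<le> (real m + 1) * (2 * E / \<kappa> ^ p)"
      using E0 \<kappa>0 by (intro mult_right_mono) auto
    also have "\<kappa> ^ p = c ^ p * (real m + 1)" unfolding \<kappa>_def power_mult_distrib Bp ..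
    also have "(real m + 1) * (2 * E / (c ^ p * (real m + 1))) = 2 * E / c ^ p" by simp
    also have "\<dots> \<le> 2 * E / c"
    proof (rule divide_left_mono)
      show "c \<le> c ^ p" using power_increasing[of 1 p c] c1 unfolding p_def by simp
    qed (use E0 c1 in auto)
    also have "\<dots> \<le> \<delta>"
    proof -
      have "2 * E \<le> \<delta> * c" unfolding c_def using \<delta> by (simp add: algebra_simps)
      then show ?thesis using c1 by (simp add: divide_le_eq)
    qed
    finally have PBad: "measure M Bad \<le> \<delta>" .
    define A where "A = space M - Bad"
    have A_s: "A \<in> sets M" unfolding A_def using Bad_s by auto
    have mA: "measure M A \<ge> 1 - \<delta>" unfolding A_def using P.prob_compl[OF Bad_s] PBad by simp
    have det: "grad_dist m \<sigma> k W0 W1 (\<lambda>i. X0 i \<omega>) (\<lambda>i. X1 i \<omega>) x \<le> \<epsilon>"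
      if \<omega>: "\<omega> \<in> A" and \<epsilon>: "\<epsilon> > 0" and W: "l2dist m W0 (\<lambda>i. X0 i \<omega>) \<le> B m * \<eta> \<epsilon>"
           "l2dist m W1 (\<lambda>i. X1 i \<omega>) \<le> B m * \<eta> \<epsilon>" and x: "x \<in> T" for \<omega> \<epsilon> W0 W1 x
    proof (cases "m = 0")
      case True then show ?thesis using \<epsilon> by (simp add: grad_dist_def)
    next
      case False
      then have m0: "m > 0" by simp
      have V: "\<bar>X0 i \<omega>\<bar> \<le> \<kappa> \<and> \<bar>X1 i \<omega>\<bar> \<le> \<kappa>" if "i < m" for i
        using \<omega> that unfolding A_def Bad_def by (auto simp: not_less)
      have \<eta>1: "\<eta> \<epsilon> \<le> 1" and \<eta>0: "\<eta> \<epsilon> > 0" using etapos \<epsilon> unfolding \<eta>_def by auto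
      define R where "R = B m * \<eta> \<epsilon>"
      have R0: "R \<ge> 0" unfolding R_def using Bpos[of m] \<eta>0 by simp
      have RB: "R \<le> B m" unfolding R_def using Bpos[of m] \<eta>1 by (simp add: mult_left_le)
      have gb: "grad_dist m \<sigma> k W0 W1 (\<lambda>i. X0 i \<omega>) (\<lambda>i. X1 i \<omega>) x \<le> sqrt 8 * (G * (1 + \<kappa> + R) ^ D) * R / sqrt (real m)"
        using grad_bound[where Va="\<lambda>i. X0 i \<omega>" and Vb="\<lambda>i. X1 i \<omega>" and Wa=W0 and Wb=W1 and m=m and K=\<kappa> and R=R, OF Cn _ hb C0 \<tau>(2)[OF x] \<tau>(1) _ R0] V W m0 \<kappa>0
        unfolding G_def D_def R_def by simp
      have Gc: "0 \<le> G * (2 + c) ^ D" using G0 c1 by simp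
      have b1: "1 + \<kappa> + R \<le> (2 + c) * B m" unfolding \<kappa>_def using B1[of m] RB by (simp add: algebra_simps)
      have "sqrt 8 * (G * (1 + \<kappa> + R) ^ D) * R / sqrt (real m) \<le> sqrt 8 * (G * ((2 + c) * B m) ^ D) * R / sqrt (real m)"
        using G0 R0 b1 \<kappa>0 by (intro divide_right_mono mult_right_mono mult_left_mono power_mono) auto
      also have "\<dots> = sqrt 8 * G * (2 + c) ^ D * \<eta> \<epsilon> * B m ^ (D + 1) / sqrt (real m)"
        unfolding R_def power_mult_distrib by (simp add: mult_ac)
      also have "\<dots> = (sqrt 8 * G * (2 + c) ^ D * \<eta> \<epsilon>) * (sqrt (real m + 1) / sqrt (real m))"
        unfolding BD by simp
      also have "\<dots> \<le> (sqrt 8 * G * (2 + c) ^ D * \<eta> \<epsilon>) * sqrt 2"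
      proof (rule mult_left_mono)
        have "(real m + 1) / real m \<le> 2" using m0 by (simp add: divide_le_eq)
        then have "sqrt ((real m + 1) / real m) \<le> sqrt 2" by (rule real_sqrt_le_mono)
        then show "sqrt (real m + 1) / sqrt (real m) \<le> sqrt 2" by (simp add: real_sqrt_divide)
        show "0 \<le> sqrt 8 * G * (2 + c) ^ D * \<eta> \<epsilon>" using G0 c1 \<eta>0 by simp
      qed
      also have "\<dots> = 4 * G * (2 + c) ^ D * \<eta> \<epsilon>"
      proof -
        have "sqrt 8 * sqrt 2 = (4::real)" by (simp flip: real_sqrt_mult)
        then show ?thesis by (simp add: algebra_simps)
      qed
      also have "\<dots> \<le> 4 * (G + 1) * (2 + c) ^ D * \<eta> \<epsilon>"
        using c1 \<eta>0 by (intro mult_right_mono) auto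
      also have "\<dots> \<le> 4 * (G + 1) * (2 + c) ^ D * (\<epsilon> / (4 * (G + 1) * (2 + c) ^ D))"
        using G0 c1 by (intro mult_left_mono) (auto simp: \<eta>_def)
      also have "\<dots> = \<epsilon>" using G0 c1 by simp
      finally show ?thesis using gb by simp
    qed
    show ?thesis using A_s mA det by blast
  qed
  show "\<exists>B \<eta>. filterlim B at_top sequentially \<and> (\<forall>m. B m > 0) \<and> (\<forall>\<epsilon>>0. \<eta> \<epsilon> > (0::real)) \<and>
     (\<forall>m. \<exists>A\<in>sets M. measure M A \<ge> 1 - \<delta> \<and>
        (\<forall>\<omega>\<in>A. \<forall>\<epsilon>>0. \<forall>W0 W1.
           l2dist m W0 (\<lambda>i. X0 i \<omega>) \<le> B m * \<eta> \<epsilon> \<and> l2dist m W1 (\<lambda>i. X1 i \<omega>) \<le> B m * \<eta> \<epsilon>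
           \<longrightarrow> (\<forall>x\<in>T. grad_dist m \<sigma> k W0 W1 (\<lambda>i. X0 i \<omega>) (\<lambda>i. X1 i \<omega>) x \<le> \<epsilon>)))"
    using lim Bpos etapos main by blast
qed

end
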